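(* Let $q\in\Bbbk^\times$. (1) The linear map $\phi:D(q)\to D(q^{-1})$ with $\phi(e_1)=e_1$, $\phi(e_2)=e_2$, $\phi(a)=qa+(q-1)c$, $\phi(b)=qb$, $\phi(c)=c$, $\phi(d)=(q-1)b+d$ extends to an isomorphism. (2) The linear map $\psi:D(q)\to D(q)$ with $\psi(e_1)=e_2$, $\psi(e_2)=e_1$, $\psi(a)=qd$, $\psi(b)=a+c$, $\psi(c)=b$, $\psi(d)=a$ extends to an isomorphism.
   Context: $\Bbbk$ is an algebraically closed field of characteristic zero. Paths are written left to right. Let $Q$ be the quiver with vertices $e_1,e_2$, arrows $a,c:e_1\to e_2$ and $b,d:e_2\to e_1$; $D(q)=\Bbbk Q/(ab-(a+c)d,\ ba-q\,dc)$. *)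

theory Defs
  imports "HOL-Algebra.QuotRing"
begin

text \<open>Paths are written left to right and represented as a start vertex together with the
  list of arrows traversed (trivial path at v = (v, [])).\<close>

datatype vert = V1 | V2
datatype arr = A | B | C | D

fun src :: "arr \<Rightarrow> vert" where
  "src A = V1" | "src C = V1" | "src B = V2" | "src D = V2"

fun tgt :: "arr \<Rightarrow> vert" where
  "tgt A = V2" | "tgt C = V2" | "tgt B = V1" | "tgt D = V1"

type_synonym path = "vert \<times> arr list"

fun valid_from :: "vert \<Rightarrow> arr list \<Rightarrow> bool" where
  "valid_from v [] = True"
| "valid_from v (x # xs) = (src x = v \<and> valid_from (tgt x) xs)"

fun end_from :: "vert \<Rightarrow> arr list \<Rightarrow> vert" where
  "end_from v [] = v"
| "end_from v (x # xs) = end_from (tgt x) xs"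

definition valid_path :: "path \<Rightarrow> bool" where
  "valid_path p = valid_from (fst p) (snd p)"

definition path_end :: "path \<Rightarrow> vert" where
  "path_end p = end_from (fst p) (snd p)"

definition pa_carrier :: "(path \<Rightarrow> 'k::field) set" where
  "pa_carrier = {f. finite {p. f p \<noteq> 0} \<and> (\<forall>p. f p \<noteq> 0 \<longrightarrow> valid_path p)}"

definition pa_add :: "(path \<Rightarrow> 'k::field) \<Rightarrow> (path \<Rightarrow> 'k) \<Rightarrow> (path \<Rightarrow> 'k)" where
  "pa_add f g = (\<lambda>p. f p + g p)"

definition pa_smul :: "'k::field \<Rightarrow> (path \<Rightarrow> 'k) \<Rightarrow> (path \<Rightarrow> 'k)" where
  "pa_smul l f = (\<lambda>p. l * f p)"

definition pa_mult :: "(path \<Rightarrow> 'k::field) \<Rightarrow> (path \<Rightarrow> 'k) \<Rightarrow> (path \<Rightarrow> 'k)" where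
  "pa_mult f g = (\<lambda>p. \<Sum>(p1, p2) \<in> {(p1, p2). valid_path p1 \<and> valid_path p2 \<and>
        path_end p1 = fst p2 \<and> (fst p1, snd p1 @ snd p2) = p}. f p1 * g p2)"

text \<open>Scalar l in kQ, i.e. l * (e1 + e2).\<close>
definition pa_scal :: "'k::field \<Rightarrow> (path \<Rightarrow> 'k)" where
  "pa_scal l = (\<lambda>p. if snd p = [] then l else 0)"

definition vtx :: "vert \<Rightarrow> (path \<Rightarrow> 'k::field)" where
  "vtx v = (\<lambda>p. if p = (v, []) then 1 else 0)"

definition arw :: "arr \<Rightarrow> (path \<Rightarrow> 'k::field)" where
  "arw x = (\<lambda>p. if p = (src x, [x]) then 1 else 0)"

definition PA :: "(path \<Rightarrow> 'k::field) ring" where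
  "PA = \<lparr>carrier = pa_carrier, mult = pa_mult, one = pa_scal 1,
         zero = (\<lambda>_. 0), add = pa_add\<rparr>"

definition rels :: "'k::field \<Rightarrow> (path \<Rightarrow> 'k) set" where
  "rels q = {(\<lambda>p. pa_mult (arw A) (arw B) p - pa_mult (pa_add (arw A) (arw C)) (arw D) p),
             (\<lambda>p. pa_mult (arw B) (arw A) p - q * pa_mult (arw D) (arw C) p)}"

definition Dideal :: "'k::field \<Rightarrow> (path \<Rightarrow> 'k) set" where
  "Dideal q = genideal PA (rels q)"

definition Dalg :: "'k::field \<Rightarrow> (path \<Rightarrow> 'k) set ring" where
  "Dalg q = PA Quot (Dideal q)"

definition cls :: "'k::field \<Rightarrow> (path \<Rightarrow> 'k) \<Rightarrow> (path \<Rightarrow> 'k) set" where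
  "cls q f = Dideal q +>\<^bsub>PA\<^esub> f"

definition alg_closed_field :: "'k::field itself \<Rightarrow> bool" where
  "alg_closed_field _ = (\<forall>n::nat. \<forall>c::nat \<Rightarrow> 'k. n \<ge> 1 \<longrightarrow>
      (\<exists>x. x ^ n + (\<Sum>i<n. c i * x ^ i) = 0))"

end

theory Submission
  imports Defs
begin


lemma iso_gen:
  fixes R :: "('a, 'm) ring_scheme" (structure)
  assumes R: "ring R"
    and S: "S \<subseteq> carrier R" and T: "T \<subseteq> carrier R"
    and F: "F \<in> ring_hom R R" and G: "G \<in> ring_hom R R"
    and GF: "\<And>x. x \<in> carrier R \<Longrightarrow> G (F x) = x"
    and FG: "\<And>x. x \<in> carrier R \<Longrightarrow> F (G x) = x"
    and FS: "\<And>s. s \<in> S \<Longrightarrow> F s \<in> genideal R T"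
    and GT: "\<And>t. t \<in> T \<Longrightarrow> G t \<in> genideal R S"
  shows "(\<lambda>X. the_elem ((\<lambda>x. genideal R T +>\<^bsub>R\<^esub> F x) ` X)) \<in> ring_iso (R Quot (genideal R S)) (R Quot (genideal R T))
     \<and> (\<forall>x\<in>carrier R. (\<lambda>X. the_elem ((\<lambda>x. genideal R T +>\<^bsub>R\<^esub> F x) ` X)) (genideal R S +>\<^bsub>R\<^esub> x) = genideal R T +>\<^bsub>R\<^esub> F x)"
proof -
  interpret ring R by fact
  let ?I = "genideal R S" and ?J = "genideal R T"
  have I: "ideal ?I R" by (rule genideal_ideal[OF S])
  have J: "ideal ?J R" by (rule genideal_ideal[OF T])
  have FR: "ring_hom_ring R R F" by (rule ring_hom_ringI2[OF R R F])
  have GR: "ring_hom_ring R R G" by (rule ring_hom_ringI2[OF R R G])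
  let ?h = "\<lambda>x. ?J +> F x"
  have h: "?h \<in> ring_hom R (R Quot ?J)"
    using ring_hom_trans[OF F ideal.rcos_ring_hom[OF J]] by (simp add: comp_def)
  have hR: "ring_hom_ring R (R Quot ?J) ?h"
    by (rule ring_hom_ringI2[OF R ideal.quotient_is_ring[OF J] h])
  have Fc: "F x \<in> carrier R" if "x \<in> carrier R" for x using F that by (simp add: ring_hom_closed)
  have Gc: "G x \<in> carrier R" if "x \<in> carrier R" for x using G that by (simp add: ring_hom_closed)
  have IFJ: "?I \<subseteq> {r \<in> carrier R. F r \<in> ?J}"
    by (rule genideal_minimal[OF ring_hom_ring.ideal_vimage[OF FR J]]) (use S FS in auto)
  have JGI: "?J \<subseteq> {r \<in> carrier R. G r \<in> ?I}"
    by (rule genideal_minimal[OF ring_hom_ring.ideal_vimage[OF GR I]]) (use T GT in auto)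
  have ker: "a_kernel R (R Quot ?J) ?h = ?I"
  proof
    show "a_kernel R (R Quot ?J) ?h \<subseteq> ?I"
    proof
      fix x assume "x \<in> a_kernel R (R Quot ?J) ?h"
      hence x: "x \<in> carrier R" "?J +> F x = ?J" unfolding a_kernel_def' FactRing_def by auto
      hence "F x \<in> ?J" using ideal.rcos_const_imp_mem[OF J] Fc by blast
      hence "G (F x) \<in> ?I" using JGI by auto
      thus "x \<in> ?I" using GF x by simp
    qed
    show "?I \<subseteq> a_kernel R (R Quot ?J) ?h"
    proof
      fix x assume "x \<in> ?I"
      hence x: "x \<in> carrier R" "F x \<in> ?J" using IFJ by auto
      hence "?J +> F x = ?J" using a_rcos_zero[OF J] by blast
      thus "x \<in> a_kernel R (R Quot ?J) ?h" unfolding a_kernel_def' FactRing_def using x by auto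
    qed
  qed
  have surj: "?h ` carrier R = carrier (R Quot ?J)"
  proof
    show "?h ` carrier R \<subseteq> carrier (R Quot ?J)" using h ring_hom_closed[OF h] by blast
    show "carrier (R Quot ?J) \<subseteq> ?h ` carrier R"
    proof
      fix X assume "X \<in> carrier (R Quot ?J)"
      then obtain y where y: "y \<in> carrier R" "X = ?J +> y"
        unfolding FactRing_def A_RCOSETS_def' by auto
      hence "X = ?h (G y)" using FG by simp
      thus "X \<in> ?h ` carrier R" using Gc y by blast
    qed
  qed
  show ?thesis
    using ring_hom_ring.FactRing_iso_set[OF hR surj] ring_hom_ring.the_elem_simp[OF hR]
    unfolding ker by simp
qed



lemma valid_from_append[simp]: "valid_from v (xs @ ys) = (valid_from v xs \<and> valid_from (end_from v xs) ys)"
  by (induction xs arbitrary: v) auto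

lemma end_from_append[simp]: "end_from v (xs @ ys) = end_from (end_from v xs) ys"
  by (induction xs arbitrary: v) auto

definition mlt :: "(path \<Rightarrow> 'k::field) \<Rightarrow> (path \<Rightarrow> 'k) \<Rightarrow> vert \<Rightarrow> arr list \<Rightarrow> 'k" where
  "mlt f g v xs = (\<Sum>k\<le>length xs. f (v, take k xs) * g (end_from v (take k xs), drop k xs))"

lemma split_set:
  "{(p1, p2). valid_path p1 \<and> valid_path p2 \<and> path_end p1 = fst p2 \<and> (fst p1, snd p1 @ snd p2) = (v, xs)}
   = (if valid_from v xs then (\<lambda>k. ((v, take k xs), (end_from v (take k xs), drop k xs))) ` {..length xs} else {})"
proof (cases "valid_from v xs")
  case True
  show ?thesis
  proof (simp only: True if_True, intro equalityI subsetI)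
    fix pp assume "pp \<in> {(p1, p2). valid_path p1 \<and> valid_path p2 \<and> path_end p1 = fst p2 \<and> (fst p1, snd p1 @ snd p2) = (v, xs)}"
    then obtain w1 ys1 w2 ys2 where pp: "pp = ((w1, ys1), (w2, ys2))" and h: "w1 = v" "ys1 @ ys2 = xs"
      "w2 = end_from w1 ys1"
      by (cases pp) (auto simp: path_end_def)
    show "pp \<in> (\<lambda>k. ((v, take k xs), (end_from v (take k xs), drop k xs))) ` {..length xs}"
      using h by (intro image_eqI[where x="length ys1"]) (auto simp: pp)
  next
    fix pp assume "pp \<in> (\<lambda>k. ((v, take k xs), (end_from v (take k xs), drop k xs))) ` {..length xs}"
    then obtain k where pp: "pp = ((v, take k xs), (end_from v (take k xs), drop k xs))" by auto
    have "valid_from v (take k xs @ drop k xs)" using True by simp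
    hence "valid_from v (take k xs) \<and> valid_from (end_from v (take k xs)) (drop k xs)"
      by (simp del: append_take_drop_id)
    thus "pp \<in> {(p1, p2). valid_path p1 \<and> valid_path p2 \<and> path_end p1 = fst p2 \<and> (fst p1, snd p1 @ snd p2) = (v, xs)}"
      by (simp add: pp valid_path_def path_end_def)
  qed
next
  case False
  then show ?thesis
    by (auto simp: valid_path_def path_end_def)
qed

lemma pa_mult_eq: "pa_mult f g (v, xs) = (if valid_from v xs then mlt f g v xs else 0)"
proof -
  have inj: "inj_on (\<lambda>k. ((v, take k xs), (end_from v (take k xs), drop k xs))) {..length xs}"
  proof (rule inj_onI)
    fix x y assume "x \<in> {..length xs}" "y \<in> {..length xs}"
      "((v, take x xs), (end_from v (take x xs), drop x xs)) = ((v, take y xs), (end_from v (take y xs), drop y xs))"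
    hence "length (take x xs) = length (take y xs)" "x \<le> length xs" "y \<le> length xs" by auto
    thus "x = y" by simp
  qed
  show ?thesis
    unfolding pa_mult_def split_set
    by (auto simp: sum.reindex[OF inj] mlt_def)
qed

lemma carrier_PA: "carrier PA = pa_carrier" by (simp add: PA_def)
lemma mult_PA: "mult PA = pa_mult" by (simp add: PA_def)
lemma add_PA: "add PA = pa_add" by (simp add: PA_def)
lemma one_PA: "one PA = pa_scal 1" by (simp add: PA_def)
lemma zero_PA: "zero PA = (\<lambda>_. 0)" by (simp add: PA_def)

lemma in_carrier: "f \<in> pa_carrier \<longleftrightarrow> finite {p. f p \<noteq> 0} \<and> (\<forall>p. f p \<noteq> 0 \<longrightarrow> valid_path p)"
  by (simp add: pa_carrier_def)

lemma carrier_valid: "f \<in> pa_carrier \<Longrightarrow> \<not> valid_from v xs \<Longrightarrow> f (v, xs) = 0"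
  unfolding in_carrier valid_path_def by force

lemma pa_mult_carrier_eq:
  assumes f: "f \<in> pa_carrier" and g: "g \<in> pa_carrier"
  shows "pa_mult f g (v, xs) = mlt f g v xs"
proof (cases "valid_from v xs")
  case False
  have "mlt f g v xs = 0" unfolding mlt_def
  proof (rule sum.neutral, intro ballI)
    fix k
    have "\<not> valid_from v (take k xs @ drop k xs)" using False by simp
    hence "\<not> valid_from v (take k xs) \<or> \<not> valid_from (end_from v (take k xs)) (drop k xs)"
      by (simp del: append_take_drop_id)
    thus "f (v, take k xs) * g (end_from v (take k xs), drop k xs) = 0"
      using carrier_valid[OF f] carrier_valid[OF g] by auto
  qed
  then show ?thesis using False by (simp add: pa_mult_eq)
qed (simp add: pa_mult_eq)

lemma pa_mult_carrier_eq': "f \<in> pa_carrier \<Longrightarrow> g \<in> pa_carrier \<Longrightarrow> pa_mult f g = (\<lambda>p. mlt f g (fst p) (snd p))"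
  by (rule ext) (metis pa_mult_carrier_eq prod.collapse)

lemma mult_closed:
  assumes f: "f \<in> pa_carrier" and g: "g \<in> pa_carrier"
  shows "pa_mult f g \<in> pa_carrier"
proof -
  let ?Sf = "{p. f p \<noteq> 0}" and ?Sg = "{p. g p \<noteq> 0}"
  have "{p. pa_mult f g p \<noteq> 0} \<subseteq> (\<lambda>(p1, p2). (fst p1, snd p1 @ snd p2)) ` (?Sf \<times> ?Sg)"
  proof
    fix p assume "p \<in> {p. pa_mult f g p \<noteq> 0}"
    then obtain v xs where p: "p = (v, xs)" and nz: "mlt f g v xs \<noteq> 0"
      using pa_mult_carrier_eq[OF f g] by (cases p) auto
    then obtain k where "f (v, take k xs) * g (end_from v (take k xs), drop k xs) \<noteq> 0"
      unfolding mlt_def using sum.not_neutral_contains_not_neutral by blast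
    thus "p \<in> (\<lambda>(p1, p2). (fst p1, snd p1 @ snd p2)) ` (?Sf \<times> ?Sg)"
      by (intro image_eqI[where x="((v, take k xs), (end_from v (take k xs), drop k xs))"]) (auto simp: p)
  qed
  moreover have "finite ((\<lambda>(p1, p2). (fst p1, snd p1 @ snd p2)) ` (?Sf \<times> ?Sg))"
    using f g by (simp add: in_carrier)
  ultimately have fin: "finite {p. pa_mult f g p \<noteq> 0}" by (rule finite_subset)
  have "valid_path p" if "pa_mult f g p \<noteq> 0" for p
    using that by (cases p) (auto simp: pa_mult_eq valid_path_def split: if_splits)
  with fin show ?thesis by (simp add: in_carrier)
qed



lemma triangle_sum:
  fixes a :: "nat \<Rightarrow> nat \<Rightarrow> 'a::comm_monoid_add"
  shows "(\<Sum>k\<le>n. \<Sum>j\<le>k. a j k) = (\<Sum>j\<le>n. \<Sum>i\<le>n - j. a j (j + i))"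
proof (induction n)
  case 0 then show ?case by simp
next
  case (Suc n)
  have "(\<Sum>j\<le>Suc n. \<Sum>i\<le>Suc n - j. a j (j + i)) = (\<Sum>j\<le>n. \<Sum>i\<le>Suc n - j. a j (j + i)) + a (Suc n) (Suc n)"
    by simp
  also have "(\<Sum>j\<le>n. \<Sum>i\<le>Suc n - j. a j (j + i)) = (\<Sum>j\<le>n. (\<Sum>i\<le>n - j. a j (j + i)) + a j (Suc n))"
  proof (rule sum.cong[OF refl])
    fix j assume "j \<in> {..n}"
    hence "Suc n - j = Suc (n - j)" "j + Suc (n - j) = Suc n" by auto
    thus "(\<Sum>i\<le>Suc n - j. a j (j + i)) = (\<Sum>i\<le>n - j. a j (j + i)) + a j (Suc n)"
      by simp
  qed
  finally show ?case using Suc by (simp add: sum.distrib add.assoc)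
qed

lemma mult_assoc_PA:
  fixes f g h :: "path \<Rightarrow> 'k::field"
  assumes f: "f \<in> pa_carrier" and g: "g \<in> pa_carrier" and h: "h \<in> pa_carrier"
  shows "pa_mult (pa_mult f g) h = pa_mult f (pa_mult g h)"
proof (rule ext)
  fix p
  obtain v :: vert and xs :: "arr list" where p: "p = (v, xs)" by (cases p)
  have fg: "pa_mult f g \<in> pa_carrier" and gh: "pa_mult g h \<in> pa_carrier" using mult_closed f g h by auto
  let ?n = "length xs"
  have "pa_mult (pa_mult f g) h p = (\<Sum>k\<le>?n. mlt f g v (take k xs) * h (end_from v (take k xs), drop k xs))"
    by (simp add: p pa_mult_carrier_eq[OF fg h] mlt_def pa_mult_carrier_eq[OF f g])
  also have "\<dots> = (\<Sum>k\<le>?n. \<Sum>j\<le>k. f (v, take j xs) * g (end_from v (take j xs), drop j (take k xs))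
                     * h (end_from v (take k xs), drop k xs))"
  proof (rule sum.cong[OF refl])
    fix k assume k: "k \<in> {..?n}"
    have "mlt f g v (take k xs) = (\<Sum>j\<le>k. f (v, take j xs) * g (end_from v (take j xs), drop j (take k xs)))"
      unfolding mlt_def using k by (intro sum.cong) (auto simp: min_def take_take)
    thus "mlt f g v (take k xs) * h (end_from v (take k xs), drop k xs) = (\<Sum>j\<le>k. f (v, take j xs) * g (end_from v (take j xs), drop j (take k xs))
                     * h (end_from v (take k xs), drop k xs))"
      by (simp add: sum_distrib_right)
  qed
  also have "\<dots> = (\<Sum>j\<le>?n. \<Sum>i\<le>?n - j. f (v, take j xs) * g (end_from v (take j xs), drop j (take (j + i) xs))
                     * h (end_from v (take (j + i) xs), drop (j + i) xs))"
    by (rule triangle_sum)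
  also have "\<dots> = (\<Sum>j\<le>?n. f (v, take j xs) * mlt g h (end_from v (take j xs)) (drop j xs))"
  proof (rule sum.cong[OF refl])
    fix j assume j: "j \<in> {..?n}"
    show "(\<Sum>i\<le>?n - j. f (v, take j xs) * g (end_from v (take j xs), drop j (take (j + i) xs))
                     * h (end_from v (take (j + i) xs), drop (j + i) xs))
          = f (v, take j xs) * mlt g h (end_from v (take j xs)) (drop j xs)"
      unfolding mlt_def sum_distrib_left
    proof (intro sum.cong, simp)
      fix i
      have e1: "drop j (take (j + i) xs) = take i (drop j xs)" by (simp add: drop_take)
      have e2: "take (j + i) xs = take j xs @ take i (drop j xs)" by (rule take_add)
      have e3: "drop (j + i) xs = drop i (drop j xs)" by (simp add: add.commute)
      show "f (v, take j xs) * g (end_from v (take j xs), drop j (take (j + i) xs)) * h (end_from v (take (j + i) xs), drop (j + i) xs) =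
         f (v, take j xs) * (g (end_from v (take j xs), take i (drop j xs)) *
          h (end_from (end_from v (take j xs)) (take i (drop j xs)), drop i (drop j xs)))"
        unfolding e1 e3 by (simp only: e2 end_from_append mult.assoc)
    qed
  qed
  also have "\<dots> = pa_mult f (pa_mult g h) p"
    by (simp add: p pa_mult_carrier_eq[OF f gh] mlt_def pa_mult_carrier_eq[OF g h])
  finally show "pa_mult (pa_mult f g) h p = pa_mult f (pa_mult g h) p" .
qed



lemma pa_mult_add_left: "pa_mult (pa_add f g) h = pa_add (pa_mult f h) (pa_mult g h)"
  by (rule ext, clarsimp simp: pa_mult_eq mlt_def pa_add_def sum.distrib distrib_right)

lemma pa_mult_add_right: "pa_mult h (pa_add f g) = pa_add (pa_mult h f) (pa_mult h g)"
  by (rule ext, clarsimp simp: pa_mult_eq mlt_def pa_add_def sum.distrib distrib_left)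

lemma add_closed:
  assumes "f \<in> pa_carrier" "g \<in> pa_carrier" shows "pa_add f g \<in> pa_carrier"
proof -
  have "{p. pa_add f g p \<noteq> 0} \<subseteq> {p. f p \<noteq> 0} \<union> {p. g p \<noteq> 0}" by (auto simp: pa_add_def)
  moreover have "finite ({p. f p \<noteq> 0} \<union> {p. g p \<noteq> 0})" using assms by (simp add: in_carrier)
  ultimately show ?thesis using assms unfolding in_carrier pa_add_def
    by (metis (mono_tags, lifting) add.right_neutral finite_subset)
qed

lemma scal_closed: "pa_scal l \<in> pa_carrier"
proof -
  have "{p. pa_scal l p \<noteq> 0} \<subseteq> {(V1, []), (V2, [])}"
    by (auto simp: pa_scal_def) (metis vert.exhaust)
  hence "finite {p. pa_scal l p \<noteq> 0}" by (rule finite_subset) simp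
  moreover have "valid_path p" if "pa_scal l p \<noteq> 0" for p
    using that by (cases p) (auto simp: pa_scal_def valid_path_def split: if_splits)
  ultimately show ?thesis by (simp add: in_carrier)
qed

lemma l_one_PA:
  fixes f :: "path \<Rightarrow> 'k::field"
  assumes f: "f \<in> pa_carrier" shows "pa_mult (pa_scal 1) f = f"
proof (rule ext)
  fix p obtain v :: vert and xs :: "arr list" where p: "p = (v, xs)" by (cases p)
  have "mlt (pa_scal 1) f v xs = (\<Sum>k\<le>length xs. if k = 0 then f (v, xs) else 0)"
    unfolding mlt_def by (intro sum.cong) (auto simp: pa_scal_def)
  thus "pa_mult (pa_scal 1) f p = f p" by (simp add: p pa_mult_carrier_eq[OF scal_closed f])
qed

lemma r_one_PA:
  fixes f :: "path \<Rightarrow> 'k::field"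
  assumes f: "f \<in> pa_carrier" shows "pa_mult f (pa_scal 1) = f"
proof (rule ext)
  fix p obtain v :: vert and xs :: "arr list" where p: "p = (v, xs)" by (cases p)
  have "mlt f (pa_scal 1) v xs = (\<Sum>k\<le>length xs. if k = length xs then f (v, xs) else 0)"
    unfolding mlt_def by (intro sum.cong) (auto simp: pa_scal_def)
  thus "pa_mult f (pa_scal 1) p = f p" by (simp add: p pa_mult_carrier_eq[OF f scal_closed])
qed

lemma ring_PA: "ring (PA :: (path \<Rightarrow> 'k::field) ring)"
proof (rule ringI)
  show "abelian_group (PA :: (path \<Rightarrow> 'k::field) ring)"
  proof (rule abelian_groupI, simp_all add: carrier_PA add_PA zero_PA add_closed)
    show "(\<lambda>_. 0::'k) \<in> pa_carrier" by (simp add: in_carrier)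
    show "\<And>x y z. x \<in> pa_carrier \<Longrightarrow> y \<in> pa_carrier \<Longrightarrow> z \<in> pa_carrier \<Longrightarrow>
      pa_add (pa_add x y) z = pa_add x (pa_add (y :: path \<Rightarrow> 'k) z)" by (simp add: pa_add_def add.assoc)
    show "\<And>x y. x \<in> pa_carrier \<Longrightarrow> y \<in> pa_carrier \<Longrightarrow> pa_add x y = pa_add y (x :: path \<Rightarrow> 'k)"
      by (simp add: pa_add_def add.commute)
    show "\<And>x. x \<in> pa_carrier \<Longrightarrow> pa_add (\<lambda>_. 0) x = (x :: path \<Rightarrow> 'k)" by (simp add: pa_add_def)
    show "\<And>x. x \<in> pa_carrier \<Longrightarrow> \<exists>y\<in>pa_carrier. pa_add y x = (\<lambda>_. 0 :: 'k)"
    proof -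
      fix x :: "path \<Rightarrow> 'k" assume x: "x \<in> pa_carrier"
      have "(\<lambda>p. - x p) \<in> pa_carrier" using x by (simp add: in_carrier)
      moreover have "pa_add (\<lambda>p. - x p) x = (\<lambda>_. 0)" by (simp add: pa_add_def)
      ultimately show "\<exists>y\<in>pa_carrier. pa_add y x = (\<lambda>_. 0)" by blast
    qed
  qed
  show "monoid (PA :: (path \<Rightarrow> 'k::field) ring)"
    by (rule monoidI) (simp_all add: carrier_PA mult_PA one_PA mult_closed scal_closed mult_assoc_PA l_one_PA r_one_PA)
qed (simp_all add: carrier_PA mult_PA add_PA pa_mult_add_left pa_mult_add_right)



lemma UNIV_arr: "(UNIV :: arr set) = {A, B, C, D}"
  by (auto intro: arr.exhaust)

instance arr :: finite
  by standard (simp add: UNIV_arr)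

fun lsum :: "nat \<Rightarrow> (arr list \<Rightarrow> 'k::comm_monoid_add) \<Rightarrow> 'k" where
  "lsum 0 F = F []"
| "lsum (Suc n) F = (\<Sum>x\<in>UNIV. lsum n (\<lambda>xs. F (x # xs)))"

lemma lsum_cong: "(\<And>xs. length xs = n \<Longrightarrow> F xs = G xs) \<Longrightarrow> lsum n F = lsum n G"
proof (induction n arbitrary: F G)
  case (Suc n)
  show ?case by (simp, intro sum.cong refl Suc.IH) (simp add: Suc.prems)
qed simp

lemma lsum_zero[simp]: "lsum n (\<lambda>_. 0) = 0"
  by (induction n) simp_all

lemma lsum_add: "lsum n (\<lambda>xs. F xs + G xs) = lsum n F + lsum n G"
  by (induction n arbitrary: F G) (simp_all add: sum.distrib)

lemma lsum_diff: "lsum n (\<lambda>xs. F xs - G xs) = lsum n F - (lsum n G :: 'k::ab_group_add)"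
  by (induction n arbitrary: F G) (simp_all add: sum_subtractf)

lemma lsum_cmult: "lsum n (\<lambda>xs. c * F xs) = c * (lsum n F :: 'k::comm_semiring_1)"
  by (induction n arbitrary: F) (simp_all add: sum_distrib_left)

lemma lsum_multc: "lsum n (\<lambda>xs. F xs * c) = (lsum n F :: 'k::comm_semiring_1) * c"
  by (induction n arbitrary: F) (simp_all add: sum_distrib_right)

lemma lsum_sum: "lsum n (\<lambda>xs. \<Sum>k\<in>K. F k xs) = (\<Sum>k\<in>K. lsum n (F k))"
proof (induction n arbitrary: F)
  case (Suc n)
  show ?case by (simp add: Suc.IH) (rule sum.swap)
qed simp

lemma lsum_swap: "lsum m (\<lambda>a. lsum n (\<lambda>b. F a b)) = lsum n (\<lambda>b. lsum m (\<lambda>a. F a b))"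
proof (induction m arbitrary: F)
  case (Suc m)
  show ?case by (simp add: Suc.IH lsum_sum)
qed simp

lemma lsum_append: "lsum (m + n) F = lsum m (\<lambda>a. lsum n (\<lambda>b. F (a @ b)))"
  by (induction m arbitrary: F) simp_all

lemma lsum_delta: "lsum n (\<lambda>xs. if xs = x0 then F xs else 0) = (if length x0 = n then F x0 else 0)"
proof (induction n arbitrary: x0 F)
  case 0 then show ?case by auto
next
  case (Suc n)
  show ?case
  proof (cases x0)
    case Nil then show ?thesis by simp
  next
    case (Cons y ys)
    have "(\<Sum>x\<in>UNIV. lsum n (\<lambda>xs. if x # xs = x0 then F (x # xs) else 0))
        = (\<Sum>x\<in>UNIV. if x = y then (if length ys = n then F (y # ys) else 0) else 0)"
    proof (rule sum.cong[OF refl])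
      fix x
      show "lsum n (\<lambda>xs. if x # xs = x0 then F (x # xs) else 0) = (if x = y then (if length ys = n then F (y # ys) else 0) else 0)"
      proof (cases "x = y")
        case True
        then show ?thesis using Suc.IH[of ys "\<lambda>xs. F (x # xs)"] by (simp add: Cons True)
      next
        case False
        then show ?thesis by (simp add: Cons)
      qed
    qed
    then show ?thesis by (simp add: Cons)
  qed
qed

lemma lsum_nz: "lsum n F \<noteq> 0 \<Longrightarrow> \<exists>xs. length xs = n \<and> F xs \<noteq> 0"
proof (induction n arbitrary: F)
  case 0 then show ?case by auto
next
  case (Suc n)
  then obtain x where "lsum n (\<lambda>xs. F (x # xs)) \<noteq> 0"
    using sum.not_neutral_contains_not_neutral by fastforce
  then obtain xs where "length xs = n" "F (x # xs) \<noteq> 0" using Suc.IH by blast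
  then show ?case by (intro exI[of _ "x # xs"]) simp
qed

fun pm :: "(arr \<Rightarrow> arr \<Rightarrow> 'k::comm_semiring_1) \<Rightarrow> arr list \<Rightarrow> arr list \<Rightarrow> 'k" where
  "pm M [] [] = 1"
| "pm M (x # xs) (y # ys) = M x y * pm M xs ys"
| "pm M _ _ = 0"

lemma pm_append: "length a = length c \<Longrightarrow> pm M (a @ b) (c @ d) = pm M a c * pm M b d"
  by (induction a c rule: list_induct2) (simp_all add: mult.assoc)

definition compat :: "(vert \<Rightarrow> vert) \<Rightarrow> (arr \<Rightarrow> arr \<Rightarrow> 'k::comm_semiring_1) \<Rightarrow> bool" where
  "compat \<sigma> M = (\<forall>x y. M x y \<noteq> 0 \<longrightarrow> src y = \<sigma> (src x) \<and> tgt y = \<sigma> (tgt x))"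

lemma pm_compat:
  assumes c: "compat \<sigma> M" and nz: "pm M xs ys \<noteq> 0"
  shows "end_from (\<sigma> w) ys = \<sigma> (end_from w xs) \<and> (valid_from w xs \<longrightarrow> valid_from (\<sigma> w) ys)"
  using nz
proof (induction xs arbitrary: ys w)
  case Nil then show ?case by (cases ys) auto
next
  case (Cons x xs)
  then obtain y ys' where ys: "ys = y # ys'" by (cases ys) auto
  with Cons.prems have "M x y \<noteq> 0" "pm M xs ys' \<noteq> 0" by auto
  hence "src y = \<sigma> (src x)" "tgt y = \<sigma> (tgt x)" using c by (auto simp: compat_def)
  with Cons.IH[OF \<open>pm M xs ys' \<noteq> 0\<close>, of "tgt x"] show ?case by (auto simp: ys)
qed

lemma pm_comp:
  assumes K: "\<And>x z. (\<Sum>y\<in>UNIV. M x y * N y z) = K x z"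
  shows "length xs = n \<Longrightarrow> length zs = n \<Longrightarrow> lsum n (\<lambda>ys. pm M xs ys * pm N ys zs) = pm K xs zs"
proof (induction n arbitrary: xs zs)
  case 0 then show ?case by simp
next
  case (Suc n)
  then obtain x xs' z zs' where xs: "xs = x # xs'" and zs: "zs = z # zs'" and l: "length xs' = n" "length zs' = n"
    by (cases xs; cases zs) auto
  have "lsum (Suc n) (\<lambda>ys. pm M xs ys * pm N ys zs) = (\<Sum>y\<in>UNIV. M x y * N y z * lsum n (\<lambda>ys. pm M xs' ys * pm N ys zs'))"
    by (simp add: xs zs lsum_cmult[symmetric] mult_ac)
  also have "\<dots> = K x z * pm K xs' zs'"
    by (simp add: Suc.IH[OF l] sum_distrib_right[symmetric] K)
  finally show ?case by (simp add: xs zs)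
qed

lemma pm_id:
  assumes "\<And>x z. K x z = (if x = z then 1 else 0)"
  shows "length xs = length zs \<Longrightarrow> pm K xs zs = (if xs = zs then 1 else 0)"
  by (induction xs zs rule: list_induct2) (auto simp: assms)

definition subst :: "(vert \<Rightarrow> vert) \<Rightarrow> (arr \<Rightarrow> arr \<Rightarrow> 'k::field) \<Rightarrow> (path \<Rightarrow> 'k) \<Rightarrow> (path \<Rightarrow> 'k)" where
  "subst \<sigma> M f = (\<lambda>p. lsum (length (snd p)) (\<lambda>xs. f (\<sigma> (fst p), xs) * pm M xs (snd p)))"

lemma subst_app: "subst \<sigma> M f (v, ys) = lsum (length ys) (\<lambda>xs. f (\<sigma> v, xs) * pm M xs ys)"
  by (simp add: subst_def)

lemma subst_add: "subst \<sigma> M (pa_add f g) = pa_add (subst \<sigma> M f) (subst \<sigma> M g)"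
  by (simp add: subst_def pa_add_def distrib_right lsum_add)

lemma subst_diff: "subst \<sigma> M (\<lambda>p. f p - g p) = (\<lambda>p. subst \<sigma> M f p - subst \<sigma> M g p)"
  by (simp add: subst_def left_diff_distrib lsum_diff)

lemma subst_smul: "subst \<sigma> M (\<lambda>p. c * f p) = (\<lambda>p. c * subst \<sigma> M f p)"
  by (simp add: subst_def lsum_cmult mult.assoc)

lemma subst_delta: "subst \<sigma> M (\<lambda>p. if p = (w, x0) then c else 0)
   = (\<lambda>p. if \<sigma> (fst p) = w \<and> length (snd p) = length x0 then c * pm M x0 (snd p) else 0)"
proof (rule ext)
  fix p
  have "subst \<sigma> M (\<lambda>p. if p = (w, x0) then c else 0) p
      = lsum (length (snd p)) (\<lambda>xs. if xs = x0 then (if \<sigma> (fst p) = w then c * pm M xs (snd p) else 0) else 0)"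
    unfolding subst_def by (rule lsum_cong) auto
  thus "subst \<sigma> M (\<lambda>p. if p = (w, x0) then c else 0) p = (if \<sigma> (fst p) = w \<and> length (snd p) = length x0 then c * pm M x0 (snd p) else 0)"
    by (simp add: lsum_delta)
qed

lemma subst_scal: "subst \<sigma> M (pa_scal l) = pa_scal l"
proof (rule ext)
  fix p :: path
  obtain v ys where p: "p = (v, ys)" by (cases p)
  show "subst \<sigma> M (pa_scal l) p = pa_scal l p"
  proof (cases ys)
    case Nil then show ?thesis by (simp add: p subst_app pa_scal_def)
  next
    case (Cons y ys')
    have "subst \<sigma> M (pa_scal l) p = lsum (length ys) (\<lambda>_. 0)"
      unfolding p subst_app by (rule lsum_cong) (auto simp: pa_scal_def Cons)
    then show ?thesis by (simp add: p pa_scal_def Cons)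
  qed
qed

lemma finite_len_set: "finite L \<Longrightarrow> finite {p :: path. length (snd p) \<in> L}"
proof -
  assume L: "finite L"
  have "{p :: path. length (snd p) \<in> L} = UNIV \<times> (\<Union>n\<in>L. {xs. length xs = n})" by auto
  moreover have "finite (UNIV :: vert set)"
  proof -
    have "(UNIV :: vert set) = {V1, V2}" by (auto intro: vert.exhaust)
    thus ?thesis by (metis finite.emptyI finite_insert)
  qed
  moreover have "finite {xs :: arr list. length xs = n}" for n
    using finite_lists_length_eq[of "UNIV :: arr set" n] by simp
  ultimately show ?thesis using L by (auto intro!: finite_cartesian_product finite_UN_I)
qed

lemma subst_closed:
  fixes f :: "path \<Rightarrow> 'k::field"
  assumes c: "compat \<sigma> M" and inv: "\<And>v. \<sigma> (\<sigma> v) = v" and f: "f \<in> pa_carrier"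
  shows "subst \<sigma> M f \<in> pa_carrier"
proof -
  have nz: "\<exists>xs. length xs = length ys \<and> f (\<sigma> v, xs) \<noteq> 0 \<and> pm M xs ys \<noteq> 0"
    if "subst \<sigma> M f (v, ys) \<noteq> 0" for v ys
    using lsum_nz[OF that[unfolded subst_app]] by auto
  have "{p. subst \<sigma> M f p \<noteq> 0} \<subseteq> {p :: path. length (snd p) \<in> (\<lambda>p. length (snd p)) ` {p. f p \<noteq> 0}}"
  proof
    fix p assume "p \<in> {p. subst \<sigma> M f p \<noteq> 0}"
    then obtain v ys where p: "p = (v, ys)" "subst \<sigma> M f (v, ys) \<noteq> 0" by (cases p) auto
    then obtain xs where "length xs = length ys" "f (\<sigma> v, xs) \<noteq> 0" using nz by blast
    thus "p \<in> {p :: path. length (snd p) \<in> (\<lambda>p. length (snd p)) ` {p. f p \<noteq> 0}}" using p by force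
  qed
  moreover have "finite {p :: path. length (snd p) \<in> (\<lambda>p. length (snd p)) ` {p. f p \<noteq> 0}}"
    by (rule finite_len_set, rule finite_imageI) (use f in \<open>simp add: in_carrier\<close>)
  ultimately have fin: "finite {p. subst \<sigma> M f p \<noteq> 0}" by (rule finite_subset)
  have "valid_path p" if hp: "subst \<sigma> M f p \<noteq> 0" for p
  proof -
    obtain v ys where p: "p = (v, ys)" by (cases p)
    then obtain xs where xs: "f (\<sigma> v, xs) \<noteq> 0" "pm M xs ys \<noteq> 0" using nz[of v ys] hp p by auto
    hence "valid_from (\<sigma> v) xs" using f by (auto simp: in_carrier valid_path_def)
    with pm_compat[OF c xs(2), of "\<sigma> v"] show ?thesis by (simp add: p inv valid_path_def)
  qed
  with fin show ?thesis by (simp add: in_carrier)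
qed

lemma subst_mult:
  fixes f g :: "path \<Rightarrow> 'k::field"
  assumes c: "compat \<sigma> M" and inv: "\<And>v. \<sigma> (\<sigma> v) = v" and f: "f \<in> pa_carrier" and g: "g \<in> pa_carrier"
  shows "subst \<sigma> M (pa_mult f g) = pa_mult (subst \<sigma> M f) (subst \<sigma> M g)"
proof (rule ext)
  fix p :: path
  obtain v ys where p: "p = (v, ys)" by (cases p)
  let ?n = "length ys"
  have sf: "subst \<sigma> M f \<in> pa_carrier" and sg: "subst \<sigma> M g \<in> pa_carrier"
    using subst_closed c inv f g by auto
  have "subst \<sigma> M (pa_mult f g) p = lsum ?n (\<lambda>xs. \<Sum>k\<le>?n. f (\<sigma> v, take k xs) * g (end_from (\<sigma> v) (take k xs), drop k xs) * pm M xs ys)"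
    unfolding p subst_app pa_mult_carrier_eq[OF f g] mlt_def
    by (rule lsum_cong) (simp add: sum_distrib_right)
  also have "\<dots> = (\<Sum>k\<le>?n. lsum ?n (\<lambda>xs. f (\<sigma> v, take k xs) * g (end_from (\<sigma> v) (take k xs), drop k xs) * pm M xs ys))"
    by (rule lsum_sum)
  also have "\<dots> = (\<Sum>k\<le>?n. subst \<sigma> M f (v, take k ys) * subst \<sigma> M g (end_from v (take k ys), drop k ys))"
  proof (rule sum.cong[OF refl])
    fix k assume k: "k \<in> {..?n}"
    hence nk: "?n = k + (?n - k)" by simp
    let ?ys1 = "take k ys" and ?ys2 = "drop k ys"
    have l1: "length ?ys1 = k" and l2: "length ?ys2 = ?n - k" using k by auto
    have "lsum ?n (\<lambda>xs. f (\<sigma> v, take k xs) * g (end_from (\<sigma> v) (take k xs), drop k xs) * pm M xs ys)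
      = lsum k (\<lambda>a. lsum (?n - k) (\<lambda>b. f (\<sigma> v, take k (a @ b)) * g (end_from (\<sigma> v) (take k (a @ b)), drop k (a @ b)) * pm M (a @ b) ys))"
      by (subst nk, subst lsum_append) (rule refl)
    also have "\<dots> = lsum k (\<lambda>a. lsum (?n - k) (\<lambda>b. (f (\<sigma> v, a) * pm M a ?ys1) * (g (\<sigma> (end_from v ?ys1), b) * pm M b ?ys2)))"
    proof (rule lsum_cong, rule lsum_cong)
      fix a b :: "arr list" assume a: "length a = k" and b: "length b = ?n - k"
      have pmeq: "pm M (a @ b) ys = pm M a ?ys1 * pm M b ?ys2"
        using pm_append[of a ?ys1 M b ?ys2] a l1 by simp
      show "f (\<sigma> v, take k (a @ b)) * g (end_from (\<sigma> v) (take k (a @ b)), drop k (a @ b)) * pm M (a @ b) ys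
          = (f (\<sigma> v, a) * pm M a ?ys1) * (g (\<sigma> (end_from v ?ys1), b) * pm M b ?ys2)"
      proof (cases "pm M a ?ys1 = 0")
        case True then show ?thesis by (simp add: pmeq)
      next
        case False
        have "end_from (\<sigma> (\<sigma> v)) ?ys1 = \<sigma> (end_from (\<sigma> v) a)" using pm_compat[OF c False] by blast
        hence "\<sigma> (end_from v ?ys1) = end_from (\<sigma> v) a" by (metis inv)
        then show ?thesis using a by (simp add: pmeq mult_ac)
      qed
    qed
    also have "\<dots> = subst \<sigma> M f (v, ?ys1) * subst \<sigma> M g (end_from v ?ys1, ?ys2)"
      unfolding subst_app l1 l2 by (simp add: lsum_cmult lsum_multc)
    finally show "lsum ?n (\<lambda>xs. f (\<sigma> v, take k xs) * g (end_from (\<sigma> v) (take k xs), drop k xs) * pm M xs ys)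
      = subst \<sigma> M f (v, ?ys1) * subst \<sigma> M g (end_from v ?ys1, ?ys2)" .
  qed
  also have "\<dots> = pa_mult (subst \<sigma> M f) (subst \<sigma> M g) p"
    by (simp add: p pa_mult_carrier_eq[OF sf sg] mlt_def)
  finally show "subst \<sigma> M (pa_mult f g) p = pa_mult (subst \<sigma> M f) (subst \<sigma> M g) p" .
qed

lemma subst_hom:
  assumes c: "compat \<sigma> (M :: arr \<Rightarrow> arr \<Rightarrow> 'k::field)" and inv: "\<And>v. \<sigma> (\<sigma> v) = v"
  shows "subst \<sigma> M \<in> ring_hom (PA :: (path \<Rightarrow> 'k) ring) PA"
  by (rule ring_hom_memI) (simp_all add: carrier_PA mult_PA add_PA one_PA subst_closed[OF c inv]
      subst_mult[OF c inv] subst_add subst_scal)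

lemma subst_comp:
  fixes f :: "path \<Rightarrow> 'k::field"
  assumes inv: "\<And>v. \<sigma>1 (\<sigma>2 v) = v"
    and K: "\<And>x z. (\<Sum>y\<in>UNIV. M x y * N y z) = (if x = z then 1 else 0)"
  shows "subst \<sigma>2 N (subst \<sigma>1 M f) = f"
proof (rule ext)
  fix p :: path
  obtain v zs where p: "p = (v, zs)" by (cases p)
  let ?n = "length zs"
  have "subst \<sigma>2 N (subst \<sigma>1 M f) p = lsum ?n (\<lambda>ys. subst \<sigma>1 M f (\<sigma>2 v, ys) * pm N ys zs)"
    by (simp add: p subst_def[of \<sigma>2 N])
  also have "\<dots> = lsum ?n (\<lambda>ys. lsum ?n (\<lambda>xs. f (v, xs) * pm M xs ys * pm N ys zs))"
  proof (rule lsum_cong)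
    fix ys :: "arr list" assume "length ys = ?n"
    thus "subst \<sigma>1 M f (\<sigma>2 v, ys) * pm N ys zs = lsum ?n (\<lambda>xs. f (v, xs) * pm M xs ys * pm N ys zs)"
      by (simp add: subst_app inv lsum_multc[symmetric])
  qed
  also have "\<dots> = lsum ?n (\<lambda>xs. f (v, xs) * lsum ?n (\<lambda>ys. pm M xs ys * pm N ys zs))"
    by (subst lsum_swap) (simp add: lsum_cmult[symmetric] mult.assoc)
  also have "\<dots> = lsum ?n (\<lambda>xs. if xs = zs then f (v, zs) else 0)"
  proof (rule lsum_cong)
    fix xs :: "arr list" assume l: "length xs = ?n"
    show "f (v, xs) * lsum ?n (\<lambda>ys. pm M xs ys * pm N ys zs) = (if xs = zs then f (v, zs) else 0)"
      using pm_comp[of M N "\<lambda>x z. if x = z then 1 else 0", OF K l refl] pm_id[of "\<lambda>x z. if x = z then (1::'k) else 0", OF _ l] by (cases "xs = zs") simp_all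
  qed
  also have "\<dots> = f p" by (simp add: lsum_delta p)
  finally show "subst \<sigma>2 N (subst \<sigma>1 M f) p = f p" .
qed



lemma arw_closed: "(arw x :: path \<Rightarrow> 'k::field) \<in> pa_carrier"
proof -
  have "{p. arw x p \<noteq> (0::'k)} \<subseteq> {(src x, [x])}" by (auto simp: arw_def)
  hence "finite {p. arw x p \<noteq> (0::'k)}" by (rule finite_subset) simp
  moreover have "valid_path p" if "arw x p \<noteq> (0::'k)" for p
    using that by (auto simp: arw_def valid_path_def split: if_splits)
  ultimately show ?thesis by (simp add: in_carrier)
qed

lemma vtx_closed: "(vtx w :: path \<Rightarrow> 'k::field) \<in> pa_carrier"
proof -
  have "{p. vtx w p \<noteq> (0::'k)} \<subseteq> {(w, [])}" by (auto simp: vtx_def)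
  hence "finite {p. vtx w p \<noteq> (0::'k)}" by (rule finite_subset) simp
  moreover have "valid_path p" if "vtx w p \<noteq> (0::'k)" for p
    using that by (auto simp: vtx_def valid_path_def split: if_splits)
  ultimately show ?thesis by (simp add: in_carrier)
qed

lemma diff_closed: "f \<in> pa_carrier \<Longrightarrow> g \<in> pa_carrier \<Longrightarrow> (\<lambda>p. f p - g p) \<in> pa_carrier"
proof -
  assume f: "f \<in> pa_carrier" and g: "g \<in> pa_carrier"
  have "{p. f p - g p \<noteq> 0} \<subseteq> {p. f p \<noteq> 0} \<union> {p. g p \<noteq> 0}" by auto
  moreover have "finite ({p. f p \<noteq> 0} \<union> {p. g p \<noteq> 0})" using f g by (simp add: in_carrier)
  ultimately show ?thesis using f g unfolding in_carrier
    by (metis (mono_tags, lifting) diff_self finite_subset)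
qed

lemma smul_closed: "f \<in> pa_carrier \<Longrightarrow> (\<lambda>p. c * f p) \<in> pa_carrier"
proof -
  assume f: "f \<in> pa_carrier"
  have "{p. c * f p \<noteq> 0} \<subseteq> {p. f p \<noteq> 0}" by auto
  then show ?thesis using f unfolding in_carrier by (metis (mono_tags, lifting) finite_subset mult_zero_right)
qed

lemma scal_mult:
  fixes f :: "path \<Rightarrow> 'k::field"
  assumes f: "f \<in> pa_carrier" shows "pa_mult (pa_scal c) f = pa_smul c f"
proof (rule ext)
  fix p obtain v :: vert and xs :: "arr list" where p: "p = (v, xs)" by (cases p)
  have "mlt (pa_scal c) f v xs = (\<Sum>k\<le>length xs. if k = 0 then c * f (v, xs) else 0)"
    unfolding mlt_def by (intro sum.cong) (auto simp: pa_scal_def)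
  thus "pa_mult (pa_scal c) f p = pa_smul c f p" by (simp add: p pa_mult_carrier_eq[OF scal_closed f] pa_smul_def)
qed

lemma take_drop_single: "(take k zs = [x] \<and> drop k zs = [y]) \<longleftrightarrow> (k = 1 \<and> zs = [x, y])"
proof
  assume h: "take k zs = [x] \<and> drop k zs = [y]"
  hence zs: "zs = [x, y]" by (metis append_Cons append_Nil append_take_drop_id)
  with h have "k = 1" by (cases k) (auto simp: take_Cons' split: if_splits)
  with zs show "k = 1 \<and> zs = [x, y]" by simp
qed auto

lemma arw_mult: "pa_mult (arw x) (arw y) = (\<lambda>p. if p = (src x, [x, y]) then (if tgt x = src y then 1 else 0) else (0::'k::field))"
proof (rule ext)
  fix p :: path obtain v zs where p: "p = (v, zs)" by (cases p)
  have mm: "mlt (arw x) (arw y :: path \<Rightarrow> 'k) v zs = (\<Sum>k\<le>length zs. if k = 1 then (if (v, zs) = (src x, [x, y]) \<and> tgt x = src y then 1 else 0) else 0)"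
    unfolding mlt_def
  proof (intro sum.cong refl)
    fix k
    show "arw x (v, take k zs) * arw y (end_from v (take k zs), drop k zs) =
       (if k = 1 then (if (v, zs) = (src x, [x, y]) \<and> tgt x = src y then 1 else 0) else (0::'k))"
      using take_drop_single[of k zs x y] by (auto simp: arw_def)
  qed
  also have "\<dots> = (if (v, zs) = (src x, [x, y]) \<and> tgt x = src y then 1 else 0)"
    by (auto simp: sum.delta)
  finally have mm: "mlt (arw x) (arw y :: path \<Rightarrow> 'k) v zs = (if (v, zs) = (src x, [x, y]) \<and> tgt x = src y then 1 else 0)" .
  show "pa_mult (arw x) (arw y) p = (if p = (src x, [x, y]) then (if tgt x = src y then 1 else 0) else (0::'k))"
    unfolding p pa_mult_carrier_eq[OF arw_closed arw_closed] mm by auto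
qed

definition rr1 :: "path \<Rightarrow> 'k::field" where
  "rr1 = (\<lambda>p. pa_mult (arw A) (arw B) p - pa_mult (pa_add (arw A) (arw C)) (arw D) p)"

definition rr2 :: "'k \<Rightarrow> path \<Rightarrow> 'k::field" where
  "rr2 c = (\<lambda>p. pa_mult (arw B) (arw A) p - c * pa_mult (arw D) (arw C) p)"

lemma rels_eq: "rels q = {rr1, rr2 q}" by (simp add: rels_def rr1_def rr2_def)

lemma rr1_eq: "rr1 = (\<lambda>p. (if p = (V1, [A, B]) then 1 else 0) - ((if p = (V1, [A, D]) then 1 else 0) + (if p = (V1, [C, D]) then 1 else 0)))"
  unfolding rr1_def pa_mult_add_left arw_mult by (simp add: pa_add_def)

lemma rr2_eq: "rr2 c = (\<lambda>p. (if p = (V2, [B, A]) then 1 else 0) - c * (if p = (V2, [D, C]) then 1 else 0))"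
  by (simp add: rr2_def arw_mult)

lemma rr1_closed: "rr1 \<in> pa_carrier"
  unfolding rr1_def
  by (intro diff_closed mult_closed add_closed arw_closed)

lemma rr2_closed: "rr2 c \<in> pa_carrier"
  unfolding rr2_def
  by (intro diff_closed smul_closed mult_closed arw_closed)

lemma subst_rr1: "subst \<sigma> M rr1 = (\<lambda>p. if \<sigma> (fst p) = V1 \<and> length (snd p) = 2
     then pm M [A, B] (snd p) - (pm M [A, D] (snd p) + pm M [C, D] (snd p)) else 0)"
  unfolding rr1_eq subst_diff subst_add[unfolded pa_add_def] subst_delta
  by (auto intro!: ext)

lemma subst_rr2: "subst \<sigma> M (rr2 c) = (\<lambda>p. if \<sigma> (fst p) = V2 \<and> length (snd p) = 2
     then pm M [B, A] (snd p) - c * pm M [D, C] (snd p) else 0)"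
  unfolding rr2_eq subst_diff subst_smul subst_delta
  by (auto intro!: ext)

lemma subst_vtx: "(\<And>v. \<sigma> (\<sigma> v) = v) \<Longrightarrow> subst \<sigma> M (vtx w) = vtx (\<sigma> w)"
  unfolding vtx_def subst_delta by (auto intro!: ext)

lemma subst_arw: "subst \<sigma> (M :: arr \<Rightarrow> arr \<Rightarrow> 'k::field) (arw x) = (\<lambda>p. if \<sigma> (fst p) = src x \<and> length (snd p) = 1 then pm M [x] (snd p) else 0)"
  unfolding arw_def subst_delta by (rule ext) simp

lemma ext2:
  fixes f g :: "path \<Rightarrow> 'k::field"
  assumes "\<And>v y1 y2. f (v, [y1, y2]) = g (v, [y1, y2])"
    and "\<And>v ys. length ys \<noteq> 2 \<Longrightarrow> f (v, ys) = 0" and "\<And>v ys. length ys \<noteq> 2 \<Longrightarrow> g (v, ys) = 0"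
  shows "f = g"
proof (rule ext)
  fix p :: path obtain v ys where p: "p = (v, ys)" by (cases p)
  show "f p = g p"
  proof (cases "length ys = 2")
    case True
    then obtain y1 y2 where "ys = [y1, y2]"
      by (metis (no_types, opaque_lifting) One_nat_def Suc_1 Suc_length_conv length_0_conv)
    then show ?thesis using assms(1) p by simp
  next
    case False then show ?thesis using assms(2,3) p by simp
  qed
qed

lemma ext1:
  fixes f g :: "path \<Rightarrow> 'k::field"
  assumes "\<And>v y. f (v, [y]) = g (v, [y])"
    and "\<And>v ys. length ys \<noteq> 1 \<Longrightarrow> f (v, ys) = 0" and "\<And>v ys. length ys \<noteq> 1 \<Longrightarrow> g (v, ys) = 0"
  shows "f = g"
proof (rule ext)
  fix p :: path obtain v ys where p: "p = (v, ys)" by (cases p)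
  show "f p = g p"
  proof (cases "length ys = 1")
    case True
    then obtain y where "ys = [y]" by (metis One_nat_def length_0_conv length_Suc_conv)
    then show ?thesis using assms(1) p by simp
  next
    case False then show ?thesis using assms(2,3) p by simp
  qed
qed



fun Mphi :: "'k::field \<Rightarrow> arr \<Rightarrow> arr \<Rightarrow> 'k" where
  "Mphi q A A = q" | "Mphi q A C = q - 1" | "Mphi q B B = q" | "Mphi q C C = 1"
| "Mphi q D B = q - 1" | "Mphi q D D = 1" | "Mphi q _ _ = 0"

fun Nphi :: "'k::field \<Rightarrow> arr \<Rightarrow> arr \<Rightarrow> 'k" where
  "Nphi q A A = 1 / q" | "Nphi q A C = - (q - 1) / q" | "Nphi q B B = 1 / q" | "Nphi q C C = 1"
| "Nphi q D B = - (q - 1) / q" | "Nphi q D D = 1" | "Nphi q _ _ = 0"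

fun Mpsi :: "'k::field \<Rightarrow> arr \<Rightarrow> arr \<Rightarrow> 'k" where
  "Mpsi q A D = q" | "Mpsi q B A = 1" | "Mpsi q B C = 1" | "Mpsi q C B = 1" | "Mpsi q D A = 1"
| "Mpsi q _ _ = 0"

fun Npsi :: "'k::field \<Rightarrow> arr \<Rightarrow> arr \<Rightarrow> 'k" where
  "Npsi q A D = 1" | "Npsi q B C = 1" | "Npsi q C B = 1" | "Npsi q C D = -1" | "Npsi q D A = 1 / q"
| "Npsi q _ _ = 0"

fun sw :: "vert \<Rightarrow> vert" where "sw V1 = V2" | "sw V2 = V1"

lemma sw_sw: "sw (sw v) = v" by (cases v) auto

lemma compat_Mphi: "compat id (Mphi q)"
  unfolding compat_def apply (intro allI) subgoal for x y by (cases x; cases y) simp_all done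
lemma compat_Nphi: "compat id (Nphi q)"
  unfolding compat_def apply (intro allI) subgoal for x y by (cases x; cases y) simp_all done
lemma compat_Mpsi: "compat sw (Mpsi q)"
  unfolding compat_def apply (intro allI) subgoal for x y by (cases x; cases y) simp_all done
lemma compat_Npsi: "compat sw (Npsi q)"
  unfolding compat_def apply (intro allI) subgoal for x y by (cases x; cases y) simp_all done

lemma MNphi: "q \<noteq> 0 \<Longrightarrow> (\<Sum>y\<in>UNIV. Mphi q x y * Nphi q y z) = (if x = z then 1 else 0)"
  by (cases x; cases z) (simp_all add: UNIV_arr field_simps)
lemma NMphi: "q \<noteq> 0 \<Longrightarrow> (\<Sum>y\<in>UNIV. Nphi q x y * Mphi q y z) = (if x = z then 1 else 0)"
  by (cases x; cases z) (simp_all add: UNIV_arr field_simps)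
lemma MNpsi: "q \<noteq> 0 \<Longrightarrow> (\<Sum>y\<in>UNIV. Mpsi q x y * Npsi q y z) = (if x = z then 1 else 0)"
  by (cases x; cases z) (simp_all add: UNIV_arr field_simps)
lemma NMpsi: "q \<noteq> 0 \<Longrightarrow> (\<Sum>y\<in>UNIV. Npsi q x y * Mpsi q y z) = (if x = z then 1 else 0)"
  by (cases x; cases z) (simp_all add: UNIV_arr field_simps)

lemma rels_carrier: "rels q \<subseteq> carrier PA"
  by (simp add: rels_eq carrier_PA rr1_closed rr2_closed)

lemma smul_in_Idl:
  fixes q c :: "'k::field"
  assumes r: "r \<in> rels q"
  shows "pa_smul c r \<in> genideal PA (rels q)"
proof -
  interpret ring "PA :: (path \<Rightarrow> 'k) ring" by (rule ring_PA)
  have I: "ideal (genideal PA (rels q)) (PA :: (path \<Rightarrow> 'k) ring)" by (rule genideal_ideal[OF rels_carrier])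
  have rI: "r \<in> genideal PA (rels q)" using genideal_self[OF rels_carrier] r by blast
  have rc: "r \<in> pa_carrier" using rels_carrier r by (auto simp: carrier_PA)
  have "pa_smul c r = pa_scal c \<otimes>\<^bsub>PA\<^esub> r" by (simp add: mult_PA scal_mult[OF rc])
  also have "\<dots> \<in> genideal PA (rels q)"
    by (rule ideal.I_l_closed[OF I rI]) (simp add: carrier_PA scal_closed)
  finally show ?thesis .
qed

lemma len2: "length ys \<noteq> 2 \<Longrightarrow> ys \<noteq> [a, b]" by auto

lemma phi_r1: "q \<noteq> 0 \<Longrightarrow> subst id (Mphi q) rr1 = pa_smul q rr1"
proof (rule ext2)
  fix v y1 y2 assume "q \<noteq> 0"
  then show "subst id (Mphi q) rr1 (v, [y1, y2]) = pa_smul q rr1 (v, [y1, y2])"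
    unfolding subst_rr1 by (cases v; cases y1; cases y2) (simp_all add: rr1_eq rr2_eq pa_smul_def field_simps)
qed ((simp only: subst_rr1)?, auto simp: rr1_eq rr2_eq pa_smul_def)

lemma phi_r2: "q \<noteq> 0 \<Longrightarrow> subst id (Mphi q) (rr2 q) = pa_smul (q * q) (rr2 (inverse q))"
proof (rule ext2)
  fix v y1 y2 assume "q \<noteq> 0"
  then show "subst id (Mphi q) (rr2 q) (v, [y1, y2]) = pa_smul (q * q) (rr2 (inverse q)) (v, [y1, y2])"
    unfolding subst_rr2 by (cases v; cases y1; cases y2) (simp_all add: rr1_eq rr2_eq pa_smul_def field_simps)
qed ((simp only: subst_rr2)?, auto simp: rr1_eq rr2_eq pa_smul_def)

lemma phiinv_r1: "q \<noteq> 0 \<Longrightarrow> subst id (Nphi q) rr1 = pa_smul (inverse q) rr1"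
proof (rule ext2)
  fix v y1 y2 assume "q \<noteq> 0"
  then show "subst id (Nphi q) rr1 (v, [y1, y2]) = pa_smul (inverse q) rr1 (v, [y1, y2])"
    unfolding subst_rr1 by (cases v; cases y1; cases y2) (simp_all add: rr1_eq rr2_eq pa_smul_def field_simps)
qed ((simp only: subst_rr1)?, auto simp: rr1_eq rr2_eq pa_smul_def)

lemma phiinv_r2: "q \<noteq> 0 \<Longrightarrow> subst id (Nphi q) (rr2 (inverse q)) = pa_smul (inverse q * inverse q) (rr2 q)"
proof (rule ext2)
  fix v y1 y2 assume "q \<noteq> 0"
  then show "subst id (Nphi q) (rr2 (inverse q)) (v, [y1, y2]) = pa_smul (inverse q * inverse q) (rr2 q) (v, [y1, y2])"
    unfolding subst_rr2 by (cases v; cases y1; cases y2) (simp_all add: rr1_eq rr2_eq pa_smul_def field_simps)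
qed ((simp only: subst_rr2)?, auto simp: rr1_eq rr2_eq pa_smul_def)

lemma psi_r1: "q \<noteq> 0 \<Longrightarrow> subst sw (Mpsi q) rr1 = pa_smul (-1) (rr2 q)"
proof (rule ext2)
  fix v y1 y2 assume "q \<noteq> 0"
  then show "subst sw (Mpsi q) rr1 (v, [y1, y2]) = pa_smul (-1) (rr2 q) (v, [y1, y2])"
    unfolding subst_rr1 by (cases v; cases y1; cases y2) (simp_all add: rr1_eq rr2_eq pa_smul_def field_simps)
qed ((simp only: subst_rr1)?, auto simp: rr1_eq rr2_eq pa_smul_def)

lemma psi_r2: "q \<noteq> 0 \<Longrightarrow> subst sw (Mpsi q) (rr2 q) = pa_smul (- q) rr1"
proof (rule ext2)
  fix v y1 y2 assume "q \<noteq> 0"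
  then show "subst sw (Mpsi q) (rr2 q) (v, [y1, y2]) = pa_smul (- q) rr1 (v, [y1, y2])"
    unfolding subst_rr2 by (cases v; cases y1; cases y2) (simp_all add: rr1_eq rr2_eq pa_smul_def field_simps)
qed ((simp only: subst_rr2)?, auto simp: rr1_eq rr2_eq pa_smul_def)

lemma psiinv_r1: "q \<noteq> 0 \<Longrightarrow> subst sw (Npsi q) rr1 = pa_smul (- inverse q) (rr2 q)"
proof (rule ext2)
  fix v y1 y2 assume "q \<noteq> 0"
  then show "subst sw (Npsi q) rr1 (v, [y1, y2]) = pa_smul (- inverse q) (rr2 q) (v, [y1, y2])"
    unfolding subst_rr1 by (cases v; cases y1; cases y2) (simp_all add: rr1_eq rr2_eq pa_smul_def field_simps)
qed ((simp only: subst_rr1)?, auto simp: rr1_eq rr2_eq pa_smul_def)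

lemma psiinv_r2: "q \<noteq> 0 \<Longrightarrow> subst sw (Npsi q) (rr2 q) = pa_smul (-1) rr1"
proof (rule ext2)
  fix v y1 y2 assume "q \<noteq> 0"
  then show "subst sw (Npsi q) (rr2 q) (v, [y1, y2]) = pa_smul (-1) rr1 (v, [y1, y2])"
    unfolding subst_rr2 by (cases v; cases y1; cases y2) (simp_all add: rr1_eq rr2_eq pa_smul_def field_simps)
qed ((simp only: subst_rr2)?, auto simp: rr1_eq rr2_eq pa_smul_def)

lemma phi_A: "subst id (Mphi q) (arw A) = pa_add (pa_smul q (arw A)) (pa_smul (q - 1) (arw C))"
proof (rule ext1)
  fix v y
  show "subst id (Mphi q) (arw A) (v, [y]) = pa_add (pa_smul q (arw A)) (pa_smul (q - 1) (arw C)) (v, [y])"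
    unfolding subst_arw by (cases v; cases y) (simp_all add: arw_def pa_add_def pa_smul_def)
qed ((simp only: subst_arw)?, auto simp: arw_def pa_add_def pa_smul_def)

lemma phi_B: "subst id (Mphi q) (arw B) = pa_smul q (arw B)"
proof (rule ext1)
  fix v y
  show "subst id (Mphi q) (arw B) (v, [y]) = pa_smul q (arw B) (v, [y])"
    unfolding subst_arw by (cases v; cases y) (simp_all add: arw_def pa_add_def pa_smul_def)
qed ((simp only: subst_arw)?, auto simp: arw_def pa_add_def pa_smul_def)

lemma phi_C: "subst id (Mphi q) (arw C) = arw C"
proof (rule ext1)
  fix v y
  show "subst id (Mphi q) (arw C) (v, [y]) = arw C (v, [y])"
    unfolding subst_arw by (cases v; cases y) (simp_all add: arw_def pa_add_def pa_smul_def)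
qed ((simp only: subst_arw)?, auto simp: arw_def pa_add_def pa_smul_def)

lemma phi_D: "subst id (Mphi q) (arw D) = pa_add (pa_smul (q - 1) (arw B)) (arw D)"
proof (rule ext1)
  fix v y
  show "subst id (Mphi q) (arw D) (v, [y]) = pa_add (pa_smul (q - 1) (arw B)) (arw D) (v, [y])"
    unfolding subst_arw by (cases v; cases y) (simp_all add: arw_def pa_add_def pa_smul_def)
qed ((simp only: subst_arw)?, auto simp: arw_def pa_add_def pa_smul_def)

lemma psi_A: "subst sw (Mpsi q) (arw A) = pa_smul q (arw D)"
proof (rule ext1)
  fix v y
  show "subst sw (Mpsi q) (arw A) (v, [y]) = pa_smul q (arw D) (v, [y])"
    unfolding subst_arw by (cases v; cases y) (simp_all add: arw_def pa_add_def pa_smul_def)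
qed ((simp only: subst_arw)?, auto simp: arw_def pa_add_def pa_smul_def)

lemma psi_B: "subst sw (Mpsi q) (arw B) = pa_add (arw A) (arw C)"
proof (rule ext1)
  fix v y
  show "subst sw (Mpsi q) (arw B) (v, [y]) = pa_add (arw A) (arw C) (v, [y])"
    unfolding subst_arw by (cases v; cases y) (simp_all add: arw_def pa_add_def pa_smul_def)
qed ((simp only: subst_arw)?, auto simp: arw_def pa_add_def pa_smul_def)

lemma psi_C: "subst sw (Mpsi q) (arw C) = arw B"
proof (rule ext1)
  fix v y
  show "subst sw (Mpsi q) (arw C) (v, [y]) = arw B (v, [y])"
    unfolding subst_arw by (cases v; cases y) (simp_all add: arw_def pa_add_def pa_smul_def)
qed ((simp only: subst_arw)?, auto simp: arw_def pa_add_def pa_smul_def)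

lemma psi_D: "subst sw (Mpsi q) (arw D) = arw A"
proof (rule ext1)
  fix v y
  show "subst sw (Mpsi q) (arw D) (v, [y]) = arw A (v, [y])"
    unfolding subst_arw by (cases v; cases y) (simp_all add: arw_def pa_add_def pa_smul_def)
qed ((simp only: subst_arw)?, auto simp: arw_def pa_add_def pa_smul_def)


lemma rr1_in: "rr1 \<in> rels c" by (simp add: rels_eq)
lemma rr2_in: "rr2 c \<in> rels c" by (simp add: rels_eq)

lemma part1:
  fixes q :: "'k::field"
  assumes q: "q \<noteq> 0"
  shows "\<exists>\<phi>. \<phi> \<in> ring_iso (Dalg q) (Dalg (inverse q))
            \<and> (\<forall>l. \<phi> (cls q (pa_scal l)) = cls (inverse q) (pa_scal l))
            \<and> \<phi> (cls q (vtx V1)) = cls (inverse q) (vtx V1)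
            \<and> \<phi> (cls q (vtx V2)) = cls (inverse q) (vtx V2)
            \<and> \<phi> (cls q (arw A)) = cls (inverse q) (pa_add (pa_smul q (arw A)) (pa_smul (q - 1) (arw C)))
            \<and> \<phi> (cls q (arw B)) = cls (inverse q) (pa_smul q (arw B))
            \<and> \<phi> (cls q (arw C)) = cls (inverse q) (arw C)
            \<and> \<phi> (cls q (arw D)) = cls (inverse q) (pa_add (pa_smul (q - 1) (arw B)) (arw D))"
proof -
  let ?F = "subst id (Mphi q)" and ?G = "subst id (Nphi q)"
  have "(\<lambda>X. the_elem ((\<lambda>x. genideal PA (rels (inverse q)) +>\<^bsub>PA\<^esub> ?F x) ` X)) \<in> ring_iso (PA Quot (genideal PA (rels q))) (PA Quot (genideal PA (rels (inverse q))))
     \<and> (\<forall>x\<in>carrier PA. (\<lambda>X. the_elem ((\<lambda>x. genideal PA (rels (inverse q)) +>\<^bsub>PA\<^esub> ?F x) ` X)) (genideal PA (rels q) +>\<^bsub>PA\<^esub> x) = genideal PA (rels (inverse q)) +>\<^bsub>PA\<^esub> ?F x)"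
  proof (rule iso_gen[OF ring_PA rels_carrier rels_carrier])
    show "?F \<in> ring_hom PA PA" by (rule subst_hom[OF compat_Mphi]) simp
    show "?G \<in> ring_hom PA PA" by (rule subst_hom[OF compat_Nphi]) simp
    show "?G (?F x) = x" for x by (rule subst_comp) (simp_all add: MNphi q)
    show "?F (?G x) = x" for x by (rule subst_comp) (simp_all add: NMphi q)
    show "?F s \<in> genideal PA (rels (inverse q))" if "s \<in> rels q" for s
      proof -
      from that have "s = rr1 \<or> s = rr2 q" unfolding rels_eq by blast
      thus ?thesis by (auto simp: phi_r1[OF q] phi_r2[OF q] intro!: smul_in_Idl rr1_in rr2_in)
    qed
    show "?G t \<in> genideal PA (rels q)" if "t \<in> rels (inverse q)" for t
      proof -
      from that have "t = rr1 \<or> t = rr2 (inverse q)" unfolding rels_eq by blast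
      thus ?thesis by (auto simp: phiinv_r1[OF q] phiinv_r2[OF q] intro!: smul_in_Idl rr1_in rr2_in)
    qed
  qed
  then obtain \<phi> where iso: "\<phi> \<in> ring_iso (Dalg q) (Dalg (inverse q))"
    and val: "\<And>x. x \<in> pa_carrier \<Longrightarrow> \<phi> (cls q x) = cls (inverse q) (?F x)"
    unfolding Dalg_def Dideal_def cls_def carrier_PA by blast
  show ?thesis
    by (intro exI[of _ \<phi>] conjI iso allI)
       (simp_all add: val scal_closed vtx_closed arw_closed subst_scal subst_vtx phi_A phi_B phi_C phi_D)
qed

lemma part2:
  fixes q :: "'k::field"
  assumes q: "q \<noteq> 0"
  shows "\<exists>\<psi>. \<psi> \<in> ring_iso (Dalg q) (Dalg q)
            \<and> (\<forall>l. \<psi> (cls q (pa_scal l)) = cls q (pa_scal l))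
            \<and> \<psi> (cls q (vtx V1)) = cls q (vtx V2)
            \<and> \<psi> (cls q (vtx V2)) = cls q (vtx V1)
            \<and> \<psi> (cls q (arw A)) = cls q (pa_smul q (arw D))
            \<and> \<psi> (cls q (arw B)) = cls q (pa_add (arw A) (arw C))
            \<and> \<psi> (cls q (arw C)) = cls q (arw B)
            \<and> \<psi> (cls q (arw D)) = cls q (arw A)"
proof -
  let ?F = "subst sw (Mpsi q)" and ?G = "subst sw (Npsi q)"
  have "(\<lambda>X. the_elem ((\<lambda>x. genideal PA (rels q) +>\<^bsub>PA\<^esub> ?F x) ` X)) \<in> ring_iso (PA Quot (genideal PA (rels q))) (PA Quot (genideal PA (rels q)))
     \<and> (\<forall>x\<in>carrier PA. (\<lambda>X. the_elem ((\<lambda>x. genideal PA (rels q) +>\<^bsub>PA\<^esub> ?F x) ` X)) (genideal PA (rels q) +>\<^bsub>PA\<^esub> x) = genideal PA (rels q) +>\<^bsub>PA\<^esub> ?F x)"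
  proof (rule iso_gen[OF ring_PA rels_carrier rels_carrier])
    show "?F \<in> ring_hom PA PA" by (rule subst_hom[OF compat_Mpsi]) (simp add: sw_sw)
    show "?G \<in> ring_hom PA PA" by (rule subst_hom[OF compat_Npsi]) (simp add: sw_sw)
    show "?G (?F x) = x" for x by (rule subst_comp) (simp_all add: MNpsi q sw_sw)
    show "?F (?G x) = x" for x by (rule subst_comp) (simp_all add: NMpsi q sw_sw)
    show "?F s \<in> genideal PA (rels q)" if "s \<in> rels q" for s
      proof -
      from that have "s = rr1 \<or> s = rr2 q" unfolding rels_eq by blast
      thus ?thesis by (auto simp: psi_r1[OF q] psi_r2[OF q] intro!: smul_in_Idl rr1_in rr2_in)
    qed
    show "?G t \<in> genideal PA (rels q)" if "t \<in> rels q" for t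
      proof -
      from that have "t = rr1 \<or> t = rr2 q" unfolding rels_eq by blast
      thus ?thesis by (auto simp: psiinv_r1[OF q] psiinv_r2[OF q] intro!: smul_in_Idl rr1_in rr2_in)
    qed
  qed
  then obtain \<psi> where iso: "\<psi> \<in> ring_iso (Dalg q) (Dalg q)"
    and val: "\<And>x. x \<in> pa_carrier \<Longrightarrow> \<psi> (cls q x) = cls q (?F x)"
    unfolding Dalg_def Dideal_def cls_def carrier_PA by blast
  show ?thesis
    by (intro exI[of _ \<psi>] conjI iso allI)
       (simp_all add: val scal_closed vtx_closed arw_closed subst_scal subst_vtx sw_sw psi_A psi_B psi_C psi_D)
qed

theorem lemma3p8:
  fixes q :: "'k::field_char_0"
  assumes "alg_closed_field TYPE('k)"
    and "q \<noteq> 0"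
  shows "(\<exists>\<phi>. \<phi> \<in> ring_iso (Dalg q) (Dalg (inverse q))
            \<and> (\<forall>l. \<phi> (cls q (pa_scal l)) = cls (inverse q) (pa_scal l))
            \<and> \<phi> (cls q (vtx V1)) = cls (inverse q) (vtx V1)
            \<and> \<phi> (cls q (vtx V2)) = cls (inverse q) (vtx V2)
            \<and> \<phi> (cls q (arw A)) = cls (inverse q) (pa_add (pa_smul q (arw A)) (pa_smul (q - 1) (arw C)))
            \<and> \<phi> (cls q (arw B)) = cls (inverse q) (pa_smul q (arw B))
            \<and> \<phi> (cls q (arw C)) = cls (inverse q) (arw C)
            \<and> \<phi> (cls q (arw D)) = cls (inverse q) (pa_add (pa_smul (q - 1) (arw B)) (arw D)))
       \<and> (\<exists>\<psi>. \<psi> \<in> ring_iso (Dalg q) (Dalg q)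
            \<and> (\<forall>l. \<psi> (cls q (pa_scal l)) = cls q (pa_scal l))
            \<and> \<psi> (cls q (vtx V1)) = cls q (vtx V2)
            \<and> \<psi> (cls q (vtx V2)) = cls q (vtx V1)
            \<and> \<psi> (cls q (arw A)) = cls q (pa_smul q (arw D))
            \<and> \<psi> (cls q (arw B)) = cls q (pa_add (arw A) (arw C))
            \<and> \<psi> (cls q (arw C)) = cls q (arw B)
            \<and> \<psi> (cls q (arw D)) = cls q (arw A))"
  using part1[OF assms(2)] part2[OF assms(2)] by blast

end
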